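(* Let $G$ be a graph. For all $n\ge 2$ the discrete fundamental group $A_1(G^{(n)})$ is abelian.
   Context: All graphs are connected, simple and locally finite. $G^{(n)}$ is the $n$th reduced power of $G$: the quotient of the Cartesian product graph $G^n$ by the coordinate-permuting action of $\Sigma_n$; equivalently vertices are degree-$n$ monomials in vertices of $G$, adjacent iff they differ by moving one token along one edge of $G$. $A_1$ is the discrete fundamental group: based homotopy classes of eventually-constant graph maps from the integer path graph $\mathbb{Z}$, where a based homotopy is a graph map $\mathbb{Z}\,\square\,I_m\to G^{(n)}$ with based rows, and the product is concatenation. *)

theory Defs
  imports Main "HOL-Library.Multiset" "HOL-Algebra.Group"
begin

definition simple_graph :: "'a set \<Rightarrow> ('a \<Rightarrow> 'a \<Rightarrow> bool) \<Rightarrow> bool" where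
  "simple_graph V E \<longleftrightarrow> (\<forall>x y. E x y \<longrightarrow> x \<in> V \<and> y \<in> V \<and> x \<noteq> y \<and> E y x)"

definition connected_graph :: "'a set \<Rightarrow> ('a \<Rightarrow> 'a \<Rightarrow> bool) \<Rightarrow> bool" where
  "connected_graph V E \<longleftrightarrow> (\<forall>x\<in>V. \<forall>y\<in>V. E\<^sup>*\<^sup>* x y)"

definition locally_finite_graph :: "'a set \<Rightarrow> ('a \<Rightarrow> 'a \<Rightarrow> bool) \<Rightarrow> bool" where
  "locally_finite_graph V E \<longleftrightarrow> (\<forall>x\<in>V. finite {y. E x y})"

text \<open>Vertices of G^(n): degree-n monomials (multisets of size n) in vertices of G.\<close>
definition reduced_power_verts :: "'a set \<Rightarrow> nat \<Rightarrow> 'a multiset set" where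
  "reduced_power_verts V n = {M. set_mset M \<subseteq> V \<and> size M = n}"

definition reduced_power_adj :: "('a \<Rightarrow> 'a \<Rightarrow> bool) \<Rightarrow> 'a multiset \<Rightarrow> 'a multiset \<Rightarrow> bool" where
  "reduced_power_adj E M M' \<longleftrightarrow> (\<exists>v w. v \<in># M \<and> E v w \<and> M' = M - {#v#} + {#w#})"

text \<open>Based, eventually constant graph maps from the integer path graph.
  Graph maps send adjacent vertices to equal or adjacent vertices.\<close>
definition based_loop :: "'v set \<Rightarrow> ('v \<Rightarrow> 'v \<Rightarrow> bool) \<Rightarrow> 'v \<Rightarrow> (int \<Rightarrow> 'v) \<Rightarrow> bool" where
  "based_loop V E x0 f \<longleftrightarrow>
     (\<forall>i. f i \<in> V) \<and> (\<forall>i. f i = f (i + 1) \<or> E (f i) (f (i + 1))) \<and>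
     (\<exists>N::nat. \<forall>i. int N \<le> \<bar>i\<bar> \<longrightarrow> f i = x0)"

text \<open>Based homotopy: a graph map from Z \<box> I_m (I_m the path graph 0..m) with based rows,
  row 0 being f and row m being g.\<close>
definition based_homotopic ::
  "'v set \<Rightarrow> ('v \<Rightarrow> 'v \<Rightarrow> bool) \<Rightarrow> 'v \<Rightarrow> (int \<Rightarrow> 'v) \<Rightarrow> (int \<Rightarrow> 'v) \<Rightarrow> bool" where
  "based_homotopic V E x0 f g \<longleftrightarrow>
     (\<exists>(m::nat) (h::int \<Rightarrow> nat \<Rightarrow> 'v).
        (\<forall>j\<le>m. based_loop V E x0 (\<lambda>i. h i j)) \<and>
        (\<forall>i. \<forall>j<m. h i j = h i (Suc j) \<or> E (h i j) (h i (Suc j))) \<and>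
        (\<forall>i. h i 0 = f i) \<and> (\<forall>i. h i m = g i))"

definition loop_radius :: "'v \<Rightarrow> (int \<Rightarrow> 'v) \<Rightarrow> nat" where
  "loop_radius x0 f = (LEAST N::nat. \<forall>i. int N \<le> \<bar>i\<bar> \<longrightarrow> f i = x0)"

definition loop_concat :: "'v \<Rightarrow> (int \<Rightarrow> 'v) \<Rightarrow> (int \<Rightarrow> 'v) \<Rightarrow> int \<Rightarrow> 'v" where
  "loop_concat x0 f g = (\<lambda>i. if i \<le> 0 then f (i + int (loop_radius x0 f))
                             else g (i - int (loop_radius x0 g)))"

definition loop_class :: "'v set \<Rightarrow> ('v \<Rightarrow> 'v \<Rightarrow> bool) \<Rightarrow> 'v \<Rightarrow> (int \<Rightarrow> 'v) \<Rightarrow> (int \<Rightarrow> 'v) set" where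
  "loop_class V E x0 f = {g. based_loop V E x0 g \<and> based_homotopic V E x0 f g}"

definition A1 :: "'v set \<Rightarrow> ('v \<Rightarrow> 'v \<Rightarrow> bool) \<Rightarrow> 'v \<Rightarrow> (int \<Rightarrow> 'v) set monoid" where
  "A1 V E x0 =
     \<lparr> carrier = {loop_class V E x0 f | f. based_loop V E x0 f},
       mult = (\<lambda>X Y. loop_class V E x0 (loop_concat x0 (SOME f. f \<in> X) (SOME g. g \<in> Y))),
       one = loop_class V E x0 (\<lambda>_. x0) \<rparr>"

end

theory Submission
  imports Defs
begin



locale grph =
  fixes W :: "'v set" and A :: "'v \<Rightarrow> 'v \<Rightarrow> bool"
  assumes symA: "A x y \<Longrightarrow> A y x"
begin

definition adj where "adj x y \<longleftrightarrow> x = y \<or> A x y"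

lemma adj_refl[simp]: "adj x x" by (simp add: adj_def)
lemma adj_sym: "adj x y \<Longrightarrow> adj y x" using symA by (auto simp: adj_def)

definition walk where "walk xs \<longleftrightarrow> xs \<noteq> [] \<and> set xs \<subseteq> W \<and> successively adj xs"

inductive gen where
  pw: "walk xs \<Longrightarrow> walk ys \<Longrightarrow> list_all2 adj xs ys \<Longrightarrow> hd xs = hd ys \<Longrightarrow> last xs = last ys \<Longrightarrow> gen xs ys"
| st1: "walk (u@[v]@w) \<Longrightarrow> gen (u@[v]@w) (u@[v,v]@w)"
| st2: "walk (u@[v]@w) \<Longrightarrow> gen (u@[v,v]@w) (u@[v]@w)"

definition hrel where "hrel xs ys \<longleftrightarrow> walk xs \<and> gen\<^sup>*\<^sup>* xs ys"

lemma walk_stutter: "walk (u@[v,v]@w) \<longleftrightarrow> walk (u@[v]@w)"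
  by (auto simp: walk_def successively_append_iff successively_Cons)

lemma gen_inv: "gen xs ys \<Longrightarrow> walk xs \<and> walk ys \<and> hd xs = hd ys \<and> last xs = last ys"
proof (induction rule: gen.induct)
  case (st1 u v w) then show ?case using walk_stutter[of u v w]
    by (cases u; cases w) auto
next
  case (st2 u v w) then show ?case using walk_stutter[of u v w]
    by (cases u; cases w) auto
qed auto

lemma gen_sym: "gen xs ys \<Longrightarrow> gen ys xs"
proof (induction rule: gen.induct)
  case (pw xs ys)
  have "list_all2 adj ys xs" using pw(3) adj_sym
    by (simp add: list_all2_conv_all_nth)
  then show ?case using pw by (intro gen.pw) auto
next
  case (st1 u v w) thus ?case using gen.st2[of u v w] by simp
next
  case (st2 u v w) thus ?case using gen.st1[of u v w] by simp
qed

lemma rtr_inv: "gen\<^sup>*\<^sup>* xs ys \<Longrightarrow> walk xs \<Longrightarrow> walk ys \<and> hd xs = hd ys \<and> last xs = last ys"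
  by (induction rule: rtranclp_induct) (auto dest: gen_inv)

lemma hrel_inv: "hrel xs ys \<Longrightarrow> walk xs \<and> walk ys \<and> hd xs = hd ys \<and> last xs = last ys"
  using rtr_inv hrel_def by blast

lemma hrel_refl: "walk xs \<Longrightarrow> hrel xs xs" by (simp add: hrel_def)

lemma hrel_trans: "hrel xs ys \<Longrightarrow> hrel ys zs \<Longrightarrow> hrel xs zs"
  by (auto simp: hrel_def)

lemma rtr_sym: "gen\<^sup>*\<^sup>* xs ys \<Longrightarrow> gen\<^sup>*\<^sup>* ys xs"
  by (induction rule: rtranclp_induct) (auto dest: gen_sym intro: converse_rtranclp_into_rtranclp)

lemma hrel_sym: "hrel xs ys \<Longrightarrow> hrel ys xs"
  using hrel_inv rtr_sym hrel_def by blast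

lemma gen_hrel: "gen xs ys \<Longrightarrow> hrel xs ys"
  using gen_inv hrel_def by blast

lemma walk_append: "walk (xs @ ys) \<longleftrightarrow> (xs = [] \<longrightarrow> walk ys) \<and> (ys = [] \<longrightarrow> walk xs) \<and>
   (xs \<noteq> [] \<longrightarrow> ys \<noteq> [] \<longrightarrow> walk xs \<and> walk ys \<and> adj (last xs) (hd ys))"
  by (auto simp: walk_def successively_append_iff)

lemma gen_congL: "gen p q \<Longrightarrow> walk u \<Longrightarrow> adj (last u) (hd p) \<Longrightarrow> gen (u@p) (u@q)"
proof (induction rule: gen.induct)
  case (pw xs ys)
  have "list_all2 adj (u@xs) (u@ys)"
    using pw by (intro list_all2_appendI) (auto simp: list_all2_refl)
  then show ?case using pw by (intro gen.pw) (auto simp: walk_def successively_append_iff)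
next
  case (st1 u' v w) then show ?case using gen.st1[of "u@u'" v w]
    by (auto simp: walk_append)
next
  case (st2 u' v w) then show ?case using gen.st2[of "u@u'" v w]
    by (cases u'; auto simp: walk_append walk_def successively_append_iff)
qed


lemma gen_congR: "gen p q \<Longrightarrow> walk u \<Longrightarrow> adj (last p) (hd u) \<Longrightarrow> gen (p@u) (q@u)"
proof (induction rule: gen.induct)
  case (pw xs ys)
  have "list_all2 adj (xs@u) (ys@u)"
    using pw by (intro list_all2_appendI) (auto simp: list_all2_refl)
  then show ?case using pw by (intro gen.pw) (auto simp: walk_def successively_append_iff)
next
  case (st1 u' v w)
  have wp: "walk ((u' @ [v] @ w) @ u)" using st1 by (simp only: walk_append) (auto simp: walk_def)
  show ?case using gen.st1[of u' v "w@u"] wp by simp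
next
  case (st2 u' v w)
  have "last (u' @ [v, v] @ w) = last (u' @ [v] @ w)" by (cases w) auto
  then have wp: "walk ((u' @ [v] @ w) @ u)" using st2 by (simp only: walk_append) (auto simp: walk_def)
  show ?case using gen.st2[of u' v "w@u"] wp by simp
qed

lemma hrel_congL: assumes "hrel p q" "walk u" "adj (last u) (hd p)" shows "hrel (u@p) (u@q)"
proof -
  have "walk p" "gen\<^sup>*\<^sup>* p q" using assms(1) hrel_def by auto
  from this(2) have "gen\<^sup>*\<^sup>* (u@p) (u@q)"
  proof (induction rule: rtranclp_induct)
    case (step y z)
    then have "hd y = hd p" "walk y" using rtr_inv[OF step(1) \<open>walk p\<close>] by auto
    then show ?case using step assms gen_congL[of y z u] by auto
  qed simp
  moreover have "walk (u@p)" using assms \<open>walk p\<close> by (auto simp: walk_def successively_append_iff)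
  ultimately show ?thesis by (simp add: hrel_def)
qed

lemma hrel_congR: assumes "hrel p q" "walk u" "adj (last p) (hd u)" shows "hrel (p@u) (q@u)"
proof -
  have "walk p" "gen\<^sup>*\<^sup>* p q" using assms(1) hrel_def by auto
  from this(2) have "gen\<^sup>*\<^sup>* (p@u) (q@u)"
  proof (induction rule: rtranclp_induct)
    case (step y z)
    then have "last y = last p" "walk y" using rtr_inv[OF step(1) \<open>walk p\<close>] by auto
    then show ?case using step assms gen_congR[of y z u] by auto
  qed simp
  moreover have "walk (p@u)" using assms \<open>walk p\<close> by (auto simp: walk_def successively_append_iff)
  ultimately show ?thesis by (simp add: hrel_def)
qed

lemma hrel_app: "hrel p p' \<Longrightarrow> hrel q q' \<Longrightarrow> adj (last p) (hd q) \<Longrightarrow> hrel (p@q) (p'@q')"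
  by (metis hrel_congL hrel_congR hrel_inv hrel_trans)

lemma st_rem: "walk (u@[v]@w) \<Longrightarrow> hrel (u@[v,v]@w) (u@[v]@w)"
  using gen.st2 gen_hrel by blast

lemma st_ins: "walk (u@[v]@w) \<Longrightarrow> hrel (u@[v]@w) (u@[v,v]@w)"
  using gen.st1 gen_hrel by blast

lemma dup_last: "walk xs \<Longrightarrow> hrel (xs @ [last xs]) xs"
proof -
  assume w: "walk xs"
  then have "xs = butlast xs @ [last xs] @ []" by (simp add: walk_def)
  then show ?thesis using st_rem[of "butlast xs" "last xs" "[]"] w by (metis append.assoc append_Cons append_Nil)
qed

lemma dup_hd: "walk xs \<Longrightarrow> hrel (hd xs # xs) xs"
proof -
  assume w: "walk xs"
  then have "xs = [] @ [hd xs] @ tl xs" by (simp add: walk_def)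
  then show ?thesis using st_rem[of "[]" "hd xs" "tl xs"] w by (metis append_Cons append_Nil)
qed

lemma join: "walk p \<Longrightarrow> walk q \<Longrightarrow> last p = hd q \<Longrightarrow> hrel (p @ q) (p @ tl q)"
proof -
  assume w: "walk p" "walk q" "last p = hd q"
  obtain p' x where p: "p = p' @ [x]" using w by (metis walk_def rev_exhaust)
  have q: "q = x # tl q" using w p by (cases q) (auto simp: walk_def)
  have "walk (p' @ [x] @ tl q)" using w p q
    by (cases "tl q") (auto simp: walk_def successively_append_iff successively_Cons)
  then have "hrel (p' @ [x,x] @ tl q) (p' @ [x] @ tl q)" by (rule st_rem)
  then show ?thesis using p q by (metis append.assoc append_Cons append_Nil)
qed

lemma rep: "x \<in> W \<Longrightarrow> hrel (replicate (Suc k) x) [x]"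
proof (induction k)
  case 0 then show ?case by (simp add: hrel_refl walk_def)
next
  case (Suc k)
  have "successively adj (replicate m x)" for m by (auto simp: successively_conv_nth)
  then have "walk (replicate (Suc k) x)" using Suc.prems by (simp add: walk_def del: replicate_Suc)
  then have "hrel (x # replicate (Suc k) x) (replicate (Suc k) x)" using dup_hd by fastforce
  then show ?case using Suc hrel_trans by simp
qed

lemma strip: "list_all2 adj xs ys \<Longrightarrow> walk xs \<Longrightarrow> walk ys \<Longrightarrow> hrel (xs @ [last ys]) (hd xs # ys)"
proof (induction xs arbitrary: ys)
  case Nil then show ?case by (simp add: walk_def)
next
  case (Cons x xs')
  obtain y ys' where ys: "ys = y # ys'" using Cons(2) by (cases ys) auto
  show ?case
  proof (cases "xs' = []")
    case True
    then have "ys' = []" using Cons(2) ys by auto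
    then show ?thesis using True ys Cons by (auto intro!: hrel_refl simp: walk_def)
  next
    case False
    then have ys'ne: "ys' \<noteq> []" using Cons(2) ys by (auto simp: list_all2_lengthD)
    obtain y' ys'' where ys': "ys' = y' # ys''" using ys'ne by (cases ys') auto
    obtain x' xs'' where xs': "xs' = x' # xs''" using False by (cases xs') auto
    have wxs': "walk xs'" and wys': "walk ys'" using Cons(3,4) ys False ys'ne
      by (auto simp: walk_def successively_Cons)
    have a1: "list_all2 adj xs' ys'" "adj x y" using Cons(2) ys by auto
    have IH: "hrel (xs' @ [last ys']) (hd xs' # ys')" using Cons(1)[OF a1(1) wxs' wys'] .
    have axx: "adj x x'" using Cons(3) xs' by (simp add: walk_def)
    have ayy: "adj y y'" using Cons(4) ys ys' by (simp add: walk_def)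
    have axy': "adj x' y'" using a1(1) xs' ys' by simp
    have inW: "x \<in> W" "x' \<in> W" "y \<in> W" "y' \<in> W" "set ys'' \<subseteq> W"
      using Cons(3,4) xs' ys ys' by (auto simp: walk_def)
    have sys'': "successively adj (y' # ys'')" using wys' ys' by (simp add: walk_def)
    have s1: "hrel (x # xs' @ [last ys]) (x # x' # ys')"
      using hrel_congL[OF IH, of "[x]"] axx inW xs' ys ys' by (simp add: walk_def)
    have w1: "walk (x # x' # y' # ys'')" using inW axx axy' sys'' by (simp add: walk_def)
    have s2: "hrel (x # x' # y' # ys'') ([x,x',y',y'] @ ys'')"
      using st_ins[of "[x,x']" y' ys''] w1 by simp
    have w3: "walk ([x,x,y,y'] @ ys'')" using inW a1(2) ayy sys'' by (simp add: walk_def)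
    have w2: "walk ([x,x',y',y'] @ ys'')" using inW axx axy' sys'' by (simp add: walk_def)
    have s3: "hrel ([x,x',y',y'] @ ys'') ([x,x,y,y'] @ ys'')"
    proof (rule gen_hrel, rule gen.pw[OF w2 w3])
      show "list_all2 adj ([x, x', y', y'] @ ys'') ([x, x, y, y'] @ ys'')"
        using axx ayy adj_sym by (intro list_all2_appendI) (auto simp: list_all2_refl)
      show "last ([x, x', y', y'] @ ys'') = last ([x, x, y, y'] @ ys'')" by (cases ys'') auto
    qed simp
    have w4: "walk (x # y # y' # ys'')" using inW a1(2) ayy sys'' by (simp add: walk_def)
    have s4: "hrel ([x,x,y,y'] @ ys'') (x # y # y' # ys'')"
      using st_rem[of "[]" x "y # y' # ys''"] w4 by simp
    have "hrel (x # x' # y' # ys'') (x # y # y' # ys'')"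
      using hrel_trans[OF hrel_trans[OF s2 s3] s4] by simp
    then have "hrel (x # x' # ys') (x # ys)" using ys ys' by simp
    from hrel_trans[OF s1 this] show ?thesis using xs' by simp
  qed
qed


lemma walk_map_upt:
  assumes "\<And>i. i \<le> k \<Longrightarrow> f i \<in> W" "\<And>i. i < k \<Longrightarrow> adj (f i) (f (Suc i))"
  shows "walk (map f [0..<Suc k])"
  using assms unfolding walk_def
  by (auto simp: successively_conv_nth nth_append simp del: upt_Suc)

lemma hd_mu[simp]: "hd (map f [0..<Suc k]) = f 0"
  by (simp add: hd_map del: upt_Suc)
lemma last_mu[simp]: "last (map f [0..<Suc k]) = f k"
  by (simp add: last_map del: upt_Suc)

lemma walk_adjI: "walk q \<Longrightarrow> i < length q \<Longrightarrow> j < length q \<Longrightarrow> i = j \<or> i = Suc j \<or> j = Suc i \<Longrightarrow> adj (q!i) (q!j)"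
  unfolding walk_def using successively_nth[of adj q] adj_sym by auto

lemma grid:
  fixes \<Psi> :: "nat \<Rightarrow> nat \<Rightarrow> 'v"
  assumes "\<And>i j. i \<le> a \<Longrightarrow> j \<le> b \<Longrightarrow> \<Psi> i j \<in> W"
    and "\<And>i j. i < a \<Longrightarrow> j \<le> b \<Longrightarrow> adj (\<Psi> i j) (\<Psi> (Suc i) j)"
    and "\<And>i j. i \<le> a \<Longrightarrow> j < b \<Longrightarrow> adj (\<Psi> i j) (\<Psi> i (Suc j))"
  shows "hrel (map (\<lambda>i. \<Psi> i 0) [0..<Suc a] @ map (\<lambda>j. \<Psi> a j) [0..<Suc b])
              (map (\<lambda>j. \<Psi> 0 j) [0..<Suc b] @ map (\<lambda>i. \<Psi> i b) [0..<Suc a])"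
  using assms
proof (induction b)
  case 0
  define R where "R = map (\<lambda>i. \<Psi> i 0) [0..<Suc a]"
  have wR: "walk R" unfolding R_def using 0 by (intro walk_map_upt) auto
  have h1: "hrel (R @ [\<Psi> a 0]) R" using dup_last[OF wR] by (simp add: R_def del: upt_Suc)
  have h2: "hrel ([\<Psi> 0 0] @ R) R" using dup_hd[OF wR] by (simp add: R_def del: upt_Suc)
  have e: "map (\<lambda>j. \<Psi> a j) [0..<Suc 0] = [\<Psi> a 0]" "map (\<lambda>j. \<Psi> 0 j) [0..<Suc 0] = [\<Psi> 0 0]" by simp_all
  show ?case unfolding R_def[symmetric] e by (rule hrel_trans[OF h1 hrel_sym[OF h2]])
next
  case (Suc b)
  define R where "R j = map (\<lambda>i. \<Psi> i j) [0..<Suc a]" for j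
  define C where "C i k = map (\<lambda>j. \<Psi> i j) [0..<Suc k]" for i k
  have IH: "hrel (R 0 @ C a b) (C 0 b @ R b)" unfolding R_def C_def
    using Suc.IH Suc.prems by (simp del: upt_Suc)
  have wR: "walk (R j)" if "j \<le> Suc b" for j unfolding R_def using Suc.prems that by (intro walk_map_upt) auto
  have wC: "walk (C i k)" if "i \<le> a" "k \<le> Suc b" for i k unfolding C_def using Suc.prems that
    by (intro walk_map_upt) auto
  have CS: "C i (Suc b) = C i b @ [\<Psi> i (Suc b)]" for i by (simp add: C_def)
  have s1: "hrel (R 0 @ C a b @ [\<Psi> a (Suc b)]) (C 0 b @ R b @ [\<Psi> a (Suc b)])"
    using hrel_congR[OF IH, of "[\<Psi> a (Suc b)]"] Suc.prems by (simp add: walk_def R_def C_def del: upt_Suc)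
  have la: "list_all2 adj (R b) (R (Suc b))" unfolding R_def using Suc.prems
    by (auto simp: list_all2_conv_all_nth simp del: upt_Suc)
  have st: "hrel (R b @ [\<Psi> a (Suc b)]) (\<Psi> 0 b # R (Suc b))"
    using strip[OF la wR wR] by (simp add: R_def del: upt_Suc)
  have s2: "hrel (C 0 b @ R b @ [\<Psi> a (Suc b)]) (C 0 b @ (\<Psi> 0 b # R (Suc b)))"
    using hrel_congL[OF st wC] by (simp add: R_def C_def del: upt_Suc)
  have wq: "walk (\<Psi> 0 b # R (Suc b))" using hrel_inv[OF st] by simp
  have s3: "hrel (C 0 b @ (\<Psi> 0 b # R (Suc b))) (C 0 b @ R (Suc b))"
    using join[OF wC wq] by (simp add: C_def del: upt_Suc)
  have wC2: "walk (C 0 b @ [\<Psi> 0 (Suc b)])" using wC[of 0 "Suc b"] CS by simp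
  have RS: "R (Suc b) = \<Psi> 0 (Suc b) # tl (R (Suc b))" unfolding R_def by (simp add: upt_conv_Cons del: upt_Suc)
  have s4: "hrel ((C 0 b @ [\<Psi> 0 (Suc b)]) @ R (Suc b)) (C 0 b @ R (Suc b))"
    using join[OF wC2 wR[of "Suc b"]] RS by (simp add: R_def del: upt_Suc)
  have "hrel (R 0 @ C a (Suc b)) (C 0 (Suc b) @ R (Suc b))"
    using hrel_trans[OF hrel_trans[OF hrel_trans[OF s1 s2] s3] hrel_sym[OF s4]] CS by simp
  then show ?case by (simp add: R_def C_def del: upt_Suc)
qed

lemma canc: assumes w: "walk q" shows "hrel (q @ rev q) [hd q]"
proof -
  define a where "a = length q - 1"
  have lq: "length q = Suc a" using w by (simp add: walk_def a_def)
  have qW: "q ! k \<in> W" if "k < length q" for k using w that by (auto simp: walk_def)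
  have g: "hrel (map (\<lambda>i. q ! min i (a - 0)) [0..<Suc a] @ map (\<lambda>j. q ! min a (a - j)) [0..<Suc a])
     (map (\<lambda>j. q ! min 0 (a - j)) [0..<Suc a] @ map (\<lambda>i. q ! min i (a - a)) [0..<Suc a])"
  proof (rule grid[of a a "\<lambda>i j. q ! min i (a - j)"])
    show "q ! min i (a - j) \<in> W" if "i \<le> a" "j \<le> a" for i j using qW lq that by auto
    show "adj (q ! min i (a - j)) (q ! min (Suc i) (a - j))" if "i < a" "j \<le> a" for i j
      using walk_adjI[OF w] lq that by (auto simp: min_def)
    show "adj (q ! min i (a - j)) (q ! min i (a - Suc j))" if "i \<le> a" "j < a" for i j
      using walk_adjI[OF w] lq that Suc_diff_Suc[of j a] by (auto simp: min_def)
  qed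
  have e1: "map (\<lambda>i. q ! min i (a - 0)) [0..<Suc a] = q"
    by (rule nth_equalityI) (auto simp: lq simp del: upt_Suc)
  have e2: "map (\<lambda>j. q ! min a (a - j)) [0..<Suc a] = rev q"
    by (rule nth_equalityI) (auto simp: lq rev_nth simp del: upt_Suc)
  have e3: "map (\<lambda>j. q ! min 0 (a - j)) [0..<Suc a] = replicate (Suc a) (q!0)"
    by (rule nth_equalityI) (auto simp del: upt_Suc replicate_Suc)
  have e4: "map (\<lambda>i. q ! min i (a - a)) [0..<Suc a] = replicate (Suc a) (q!0)"
    by (rule nth_equalityI) (auto simp del: upt_Suc replicate_Suc)
  have "hrel (q @ rev q) (replicate (Suc a + Suc a) (q!0))"
    using g e1 e2 e3 e4 by (simp add: replicate_add[symmetric] del: replicate_Suc upt_Suc)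
  moreover have "hrel (replicate (Suc (Suc a + a)) (q!0)) [q!0]" by (rule rep) (use qW lq in auto)
  ultimately show ?thesis using w by (simp add: hd_conv_nth walk_def del: replicate_Suc) (metis add_Suc hrel_trans)
qed


definition loop_of :: "'v \<Rightarrow> 'v list \<Rightarrow> int \<Rightarrow> 'v" where
  "loop_of x0 xs i = (if 0 \<le> i \<and> i < int (length xs) then xs ! nat i else x0)"

lemma bl_loop_of:
  assumes x0: "x0 \<in> W" and w: "walk xs" and h: "hd xs = x0" and l: "last xs = x0"
  shows "based_loop W A x0 (loop_of x0 xs)"
  unfolding based_loop_def
proof (intro conjI allI)
  fix i
  show "loop_of x0 xs i \<in> W" using x0 w by (auto simp: loop_of_def walk_def)
  have ne: "xs \<noteq> []" using w by (simp add: walk_def)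
  have "adj (loop_of x0 xs i) (loop_of x0 xs (i+1))"
  proof (cases "0 \<le> i \<and> i + 1 < int (length xs)")
    case True
    then have "nat (i+1) = Suc (nat i)" by auto
    then show ?thesis using True successively_nth[of adj xs "nat i"] w
      by (auto simp: loop_of_def walk_def)
  next
    case False
    show ?thesis
    proof (cases "i = -1")
      case True then show ?thesis using h ne by (auto simp: loop_of_def hd_conv_nth)
    next
      case F2: False
      show ?thesis
      proof (cases "i = int (length xs) - 1")
        case True
        then have "nat i = length xs - 1" by auto
        then show ?thesis using True l ne by (auto simp: loop_of_def last_conv_nth)
      next
        case False
        then show ?thesis using F2 \<open>\<not> (0 \<le> i \<and> i + 1 < int (length xs))\<close> by (auto simp: loop_of_def)
      qed
    qed
  qed
  then show "loop_of x0 xs i = loop_of x0 xs (i + 1) \<or> A (loop_of x0 xs i) (loop_of x0 xs (i + 1))"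
    by (simp add: adj_def)
next
  show "\<exists>N::nat. \<forall>i. int N \<le> \<bar>i\<bar> \<longrightarrow> loop_of x0 xs i = x0"
    by (rule exI[of _ "length xs"]) (auto simp: loop_of_def)
qed

abbreviation H where "H x0 \<equiv> based_homotopic W A x0"

lemma H_refl: "based_loop W A x0 f \<Longrightarrow> H x0 f f"
  unfolding based_homotopic_def by (rule exI[of _ 0], rule exI[of _ "\<lambda>i j. f i"]) auto

lemma H_step: "based_loop W A x0 f \<Longrightarrow> based_loop W A x0 g \<Longrightarrow> (\<And>i. adj (f i) (g i)) \<Longrightarrow> H x0 f g"
  unfolding based_homotopic_def
  apply (rule exI[of _ 1], rule exI[of _ "\<lambda>i j. if j = 0 then f i else g i"])
  apply (auto simp: adj_def le_Suc_eq)
  done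

lemma H_sym: assumes "H x0 f g" shows "H x0 g f"
proof -
  obtain m h where hh: "\<forall>j\<le>m. based_loop W A x0 (\<lambda>i. h i j)"
    "\<forall>i. \<forall>j<m. h i j = h i (Suc j) \<or> A (h i j) (h i (Suc j))" "\<forall>i. h i 0 = f i" "\<forall>i. h i m = g i"
    using assms unfolding based_homotopic_def by blast
  show ?thesis unfolding based_homotopic_def
  proof (rule exI[of _ m], rule exI[of _ "\<lambda>i j. h i (m - j)"], intro conjI allI impI)
    fix j assume "j \<le> m" then show "based_loop W A x0 (\<lambda>i. h i (m - j))" using hh(1) by auto
  next
    fix i j assume j: "j < m"
    then have e: "m - j = Suc (m - Suc j)" by arith
    have "h i (m - Suc j) = h i (Suc (m - Suc j)) \<or> A (h i (m - Suc j)) (h i (Suc (m - Suc j)))"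
      using hh(2) j by auto
    then show "h i (m - j) = h i (m - Suc j) \<or> A (h i (m - j)) (h i (m - Suc j))"
      using e symA by metis
  qed (use hh in auto)
qed

lemma H_trans: assumes "H x0 f g" "H x0 g k" shows "H x0 f k"
proof -
  obtain m1 h1 where h1: "\<forall>j\<le>m1. based_loop W A x0 (\<lambda>i. h1 i j)"
    "\<forall>i. \<forall>j<m1. h1 i j = h1 i (Suc j) \<or> A (h1 i j) (h1 i (Suc j))" "\<forall>i. h1 i 0 = f i" "\<forall>i. h1 i m1 = g i"
    using assms(1) unfolding based_homotopic_def by blast
  obtain m2 h2 where h2: "\<forall>j\<le>m2. based_loop W A x0 (\<lambda>i. h2 i j)"
    "\<forall>i. \<forall>j<m2. h2 i j = h2 i (Suc j) \<or> A (h2 i j) (h2 i (Suc j))" "\<forall>i. h2 i 0 = g i" "\<forall>i. h2 i m2 = k i"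
    using assms(2) unfolding based_homotopic_def by blast
  define h where "h i j = (if j \<le> m1 then h1 i j else h2 i (j - m1))" for i j
  show ?thesis unfolding based_homotopic_def
  proof (rule exI[of _ "m1 + m2"], rule exI[of _ h], intro conjI allI impI)
    fix j assume "j \<le> m1 + m2"
    then show "based_loop W A x0 (\<lambda>i. h i j)" using h1(1) h2(1) by (cases "j \<le> m1") (auto simp: h_def)
  next
    fix i j assume j: "j < m1 + m2"
    show "h i j = h i (Suc j) \<or> A (h i j) (h i (Suc j))"
    proof (cases "j < m1")
      case True then show ?thesis using h1(2) by (auto simp: h_def)
    next
      case False
      show ?thesis
      proof (cases "j = m1")
        case True
        then show ?thesis using h1(4) h2(3) h2(2)[rule_format, of 0 i] j by (auto simp: h_def)
      next
        case False
        then have "Suc j - m1 = Suc (j - m1)" "j - m1 < m2" using \<open>\<not> j < m1\<close> j by arith+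
        then show ?thesis using h2(2) False \<open>\<not> j < m1\<close> by (auto simp: h_def)
      qed
    qed
  next
    fix i show "h i 0 = f i" using h1(3) by (simp add: h_def)
  next
    fix i show "h i (m1 + m2) = k i" using h1(4) h2(3) h2(4) by (cases "m2 = 0") (auto simp: h_def)
  qed
qed

lemma nth_stutter: "length u < k \<Longrightarrow> (u @ v # v # w) ! k = (u @ v # w) ! (k - 1)"
proof -
  assume a: "length u < k"
  then have e: "k - length u = Suc (k - Suc (length u))" "k - 1 - length u = k - Suc (length u)" by arith+
  have nl: "\<not> k - 1 < length u" using a by arith
  have "(u @ v # v # w) ! k = (v # v # w) ! (k - length u)" using a by (simp add: nth_append)
  also have "\<dots> = (v # w) ! (k - Suc (length u))" using e(1) by simp
  also have "\<dots> = (v # w) ! (k - 1 - length u)" using e(2) by simp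
  also have "\<dots> = (u @ v # w) ! (k - 1)" using nl by (simp add: nth_append)
  finally show ?thesis .
qed

lemma st_H:
  assumes x0: "x0 \<in> W" and w: "walk (u@[v]@w)" and h: "hd (u@[v]@w) = x0" and l: "last (u@[v]@w) = x0"
  shows "H x0 (loop_of x0 (u@[v]@w)) (loop_of x0 (u@[v,v]@w))"
proof -
  let ?xs = "u@[v]@w" and ?ys = "u@[v,v]@w"
  have gi: "gen ?xs ?ys" using gen.st1 w by blast
  then have wy: "walk ?ys" "hd ?ys = x0" "last ?ys = x0" using gen_inv h l by auto
  have b1: "based_loop W A x0 (loop_of x0 ?xs)" using bl_loop_of x0 w h l by blast
  have b2: "based_loop W A x0 (loop_of x0 ?ys)" using bl_loop_of x0 wy by blast
  have eq: "loop_of x0 ?ys i = (if i \<le> int (length u) then loop_of x0 ?xs i else loop_of x0 ?xs (i - 1))" for i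
  proof (cases "i \<le> int (length u)")
    case True then show ?thesis
      by (cases "i < int (length u)") (auto simp: loop_of_def nth_append)
  next
    case False
    then have "nat (i - 1) = nat i - 1" "length u < nat i" by auto
    then show ?thesis using False nth_stutter[of u "nat i" v w] by (auto simp: loop_of_def)
  qed
  show ?thesis
  proof (rule H_step[OF b1 b2])
    fix i
    show "adj (loop_of x0 ?xs i) (loop_of x0 ?ys i)"
    proof (cases "i \<le> int (length u)")
      case True then show ?thesis using eq by simp
    next
      case False
      have "loop_of x0 ?xs (i - 1) = loop_of x0 ?xs (i - 1 + 1) \<or> A (loop_of x0 ?xs (i - 1)) (loop_of x0 ?xs (i - 1 + 1))"
        using b1 unfolding based_loop_def by blast
      then show ?thesis using eq False adj_sym by (auto simp: adj_def)
    qed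
  qed
qed

lemma gen_H: "gen xs ys \<Longrightarrow> x0 \<in> W \<Longrightarrow> hd xs = x0 \<Longrightarrow> last xs = x0 \<Longrightarrow> H x0 (loop_of x0 xs) (loop_of x0 ys)"
proof (induction rule: gen.induct)
  case (pw xs ys)
  have b1: "based_loop W A x0 (loop_of x0 xs)" using bl_loop_of pw by blast
  have b2: "based_loop W A x0 (loop_of x0 ys)" using bl_loop_of pw by metis
  show ?case
  proof (rule H_step[OF b1 b2])
    fix i show "adj (loop_of x0 xs i) (loop_of x0 ys i)"
      using pw(3) by (auto simp: loop_of_def list_all2_conv_all_nth)
  qed
next
  case (st1 u v w) then show ?case using st_H by blast
next
  case (st2 u v w)
  have "hd (u @ [v] @ w) = x0" "last (u @ [v] @ w) = x0" using st2 by (cases u; cases w; auto)+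
  then show ?case using st_H[of x0 u v w] st2 H_sym by blast
qed

lemma hrel_H: assumes "hrel xs ys" "x0 \<in> W" "hd xs = x0" "last xs = x0"
  shows "H x0 (loop_of x0 xs) (loop_of x0 ys)"
proof -
  have "walk xs" "gen\<^sup>*\<^sup>* xs ys" using assms(1) hrel_def by auto
  from this(2) show ?thesis
  proof (induction rule: rtranclp_induct)
    case base then show ?case using H_refl bl_loop_of assms \<open>walk xs\<close> by blast
  next
    case (step y z)
    then have "hd y = x0" "last y = x0" using rtr_inv[OF step(1) \<open>walk xs\<close>] assms by auto
    then show ?case using step gen_H assms H_trans by blast
  qed
qed

end



locale rp =
  fixes V :: "'a set" and E :: "'a \<Rightarrow> 'a \<Rightarrow> bool" and n :: nat
  assumes sg: "simple_graph V E"
begin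

lemma Esym: "E x y \<Longrightarrow> E y x" using sg by (auto simp: simple_graph_def)
lemma EV: "E x y \<Longrightarrow> x \<in> V \<and> y \<in> V" using sg by (auto simp: simple_graph_def)

lemma radj_sym: "reduced_power_adj E M M' \<Longrightarrow> reduced_power_adj E M' M"
  unfolding reduced_power_adj_def
proof (elim exE conjE)
  fix v w assume v: "v \<in># M" "E v w" "M' = M - {#v#} + {#w#}"
  show "\<exists>v w. v \<in># M' \<and> E v w \<and> M = M' - {#v#} + {#w#}"
    by (rule exI[of _ w], rule exI[of _ v]) (use v Esym in auto)
qed

sublocale grph "reduced_power_verts V n" "reduced_power_adj E"
  by unfold_locales (rule radj_sym)

definition gadj where "gadj u w \<longleftrightarrow> u = w \<or> E u w"
definition gwalk where "gwalk c \<longleftrightarrow> c \<noteq> [] \<and> set c \<subseteq> V \<and> successively gadj c"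
definition radj where "radj M M' \<longleftrightarrow> M = M' \<or> reduced_power_adj E M M'"
definition rwalk where "rwalk k P \<longleftrightarrow> P \<noteq> [] \<and> (\<forall>M\<in>set P. set_mset M \<subseteq> V \<and> size M = k) \<and> successively radj P"

lemma walk_rwalk: "walk P \<longleftrightarrow> rwalk n P"
  unfolding walk_def rwalk_def adj_def radj_def by (auto simp: reduced_power_verts_def)

lemma radj_plus: "reduced_power_adj E M M' \<Longrightarrow> reduced_power_adj E (M + C) (M' + C)"
  unfolding reduced_power_adj_def
proof (elim exE conjE)
  fix v w assume v: "v \<in># M" "E v w" "M' = M - {#v#} + {#w#}"
  show "\<exists>v' w'. v' \<in># M + C \<and> E v' w' \<and> M' + C = M + C - {#v'#} + {#w'#}"
    by (rule exI[of _ v], rule exI[of _ w]) (use v in auto)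
qed

definition tp :: "'a multiset \<Rightarrow> 'a list \<Rightarrow> 'a multiset list" where
  "tp S c = map (\<lambda>u. add_mset u S) c"

lemma rwalk_tp: "gwalk c \<Longrightarrow> set_mset S \<subseteq> V \<Longrightarrow> size S + 1 = k \<Longrightarrow> rwalk k (tp S c)"
  unfolding rwalk_def tp_def gwalk_def
  apply (auto simp: successively_map)
  apply (erule successively_mono)
  apply (auto simp: gadj_def radj_def reduced_power_adj_def)
  done

lemma PG:
  assumes P: "rwalk k P" and Q: "rwalk l Q" and kl: "k + l = n"
  shows "hrel (map (\<lambda>p. p + hd Q) P @ map (\<lambda>q. last P + q) Q) (map (\<lambda>q. hd P + q) Q @ map (\<lambda>p. p + last Q) P)"
proof -
  define a where "a = length P - 1"
  define b where "b = length Q - 1"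
  have lP: "length P = Suc a" using P by (simp add: rwalk_def a_def)
  have lQ: "length Q = Suc b" using Q by (simp add: rwalk_def b_def)
  have ne: "P \<noteq> []" "Q \<noteq> []" using P Q by (auto simp: rwalk_def)
  have g: "hrel (map (\<lambda>i. P!i + Q!0) [0..<Suc a] @ map (\<lambda>j. P!a + Q!j) [0..<Suc b])
              (map (\<lambda>j. P!0 + Q!j) [0..<Suc b] @ map (\<lambda>i. P!i + Q!b) [0..<Suc a])"
  proof (rule grid[of a b "\<lambda>i j. P!i + Q!j"])
    show "P!i + Q!j \<in> reduced_power_verts V n" if "i \<le> a" "j \<le> b" for i j
      using P Q kl that lP lQ unfolding rwalk_def reduced_power_verts_def
      by (auto dest!: nth_mem[of i P] nth_mem[of j Q])
    show "adj (P!i + Q!j) (P!Suc i + Q!j)" if "i < a" "j \<le> b" for i j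
      using successively_nth[of radj P i] P that lP radj_plus[of "P!i" "P!Suc i" "Q!j"]
      by (auto simp: rwalk_def radj_def adj_def)
    show "adj (P!i + Q!j) (P!i + Q!Suc j)" if "i \<le> a" "j < b" for i j
      using successively_nth[of radj Q j] Q that lQ radj_plus[of "Q!j" "Q!Suc j" "P!i"]
      by (auto simp: rwalk_def radj_def adj_def add.commute)
  qed
  have e1: "map (\<lambda>i. P!i + Q!0) [0..<Suc a] = map (\<lambda>p. p + hd Q) P"
    by (rule nth_equalityI) (use lP lQ ne in \<open>auto simp: hd_conv_nth simp del: upt_Suc\<close>)
  have e2: "map (\<lambda>j. P!a + Q!j) [0..<Suc b] = map (\<lambda>q. last P + q) Q"
    by (rule nth_equalityI) (use lP lQ ne in \<open>auto simp: last_conv_nth simp del: upt_Suc\<close>)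
  have e3: "map (\<lambda>j. P!0 + Q!j) [0..<Suc b] = map (\<lambda>q. hd P + q) Q"
    by (rule nth_equalityI) (use lP lQ ne in \<open>auto simp: hd_conv_nth simp del: upt_Suc\<close>)
  have e4: "map (\<lambda>i. P!i + Q!b) [0..<Suc a] = map (\<lambda>p. p + last Q) P"
    by (rule nth_equalityI) (use lP lQ ne in \<open>auto simp: last_conv_nth simp del: upt_Suc\<close>)
  show ?thesis using g by (simp only: e1 e2 e3 e4)
qed

end



context rp begin

lemma rwalk_append: "rwalk k P \<Longrightarrow> rwalk k Q \<Longrightarrow> radj (last P) (hd Q) \<Longrightarrow> rwalk k (P @ Q)"
  by (auto simp: rwalk_def successively_append_iff)

lemma radj_refl[simp]: "radj M M" by (simp add: radj_def)

lemma tp_plus: "map (\<lambda>p. p + C) (tp S c) = tp (S + C) c"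
  by (simp add: tp_def)
lemma tp_single: "map (\<lambda>q. M + q) (tp {#} c) = tp M c"
  by (simp add: tp_def)
lemma tp_ne[simp]: "tp S c = [] \<longleftrightarrow> c = []" by (simp add: tp_def)
lemma hd_tp: "c \<noteq> [] \<Longrightarrow> hd (tp S c) = add_mset (hd c) S" by (simp add: tp_def hd_map)
lemma last_tp: "c \<noteq> [] \<Longrightarrow> last (tp S c) = add_mset (last c) S" by (simp add: tp_def last_map)
lemma tp_app: "tp S (c @ d) = tp S c @ tp S d" by (simp add: tp_def)
lemma tp_rev: "tp S (rev c) = rev (tp S c)" by (simp add: tp_def rev_map)

lemma conn_path: "E\<^sup>*\<^sup>* x y \<Longrightarrow> x \<in> V \<Longrightarrow> \<exists>c. gwalk c \<and> hd c = x \<and> last c = y"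
proof (induction rule: rtranclp_induct)
  case base then show ?case by (intro exI[of _ "[x]"]) (auto simp: gwalk_def)
next
  case (step y z)
  then obtain c where c: "gwalk c" "hd c = x" "last c = y" by blast
  have "gwalk (c @ [z])" using c step EV by (auto simp: gwalk_def successively_append_iff gadj_def)
  then show ?case using c by (intro exI[of _ "c @ [z]"]) (auto simp: gwalk_def)
qed

definition cp where "cp a v = (SOME c. gwalk c \<and> hd c = a \<and> last c = v \<and> (v = a \<longrightarrow> c = [a]))"

lemma cp: assumes "connected_graph V E" "a \<in> V" "v \<in> V"
  shows "gwalk (cp a v) \<and> hd (cp a v) = a \<and> last (cp a v) = v \<and> (v = a \<longrightarrow> cp a v = [a])"
proof -
  have "\<exists>c. gwalk c \<and> hd c = a \<and> last c = v \<and> (v = a \<longrightarrow> c = [a])"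
  proof (cases "v = a")
    case True then show ?thesis using assms by (intro exI[of _ "[a]"]) (auto simp: gwalk_def)
  next
    case False
    then show ?thesis using conn_path[of a v] assms by (auto simp: connected_graph_def)
  qed
  then show ?thesis unfolding cp_def by (rule someI_ex)
qed

fun Z :: "'a \<Rightarrow> 'a multiset \<Rightarrow> 'a list \<Rightarrow> 'a multiset list" where
  "Z a B [] = [B]"
| "Z a B (y # L) = Z a (add_mset a B) L @ tp (B + mset L) (cp a y)"

lemma Z_ne[simp]: "Z a B L \<noteq> []"
  by (induction L arbitrary: B) auto

lemma Z_hd: "hd (Z a B L) = B + replicate_mset (length L) a"
  by (induction L arbitrary: B) auto

context
  fixes a assumes conn: "connected_graph V E" and aV: "a \<in> V"
begin

lemma cpa: "v \<in> V \<Longrightarrow> gwalk (cp a v)" "v \<in> V \<Longrightarrow> hd (cp a v) = a" "v \<in> V \<Longrightarrow> last (cp a v) = v"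
   "cp a a = [a]"
  using cp[OF conn aV] aV by auto

lemma cp_ne: "v \<in> V \<Longrightarrow> cp a v \<noteq> []" using cpa(1) by (auto simp: gwalk_def)

lemma Z_last: "set L \<subseteq> V \<Longrightarrow> last (Z a B L) = B + mset L"
  by (induction L arbitrary: B) (auto simp: last_tp cp_ne cpa)

lemma Z_rwalk: "set L \<subseteq> V \<Longrightarrow> set_mset B \<subseteq> V \<Longrightarrow> rwalk (size B + length L) (Z a B L)"
proof (induction L arbitrary: B)
  case Nil then show ?case by (simp add: rwalk_def)
next
  case (Cons y L)
  have w1: "rwalk (size B + length (y # L)) (Z a (add_mset a B) L)"
    using Cons.IH[of "add_mset a B"] Cons.prems aV by simp
  have w2: "rwalk (size B + length (y # L)) (tp (B + mset L) (cp a y))"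
    using Cons.prems by (intro rwalk_tp cpa) auto
  have j: "last (Z a (add_mset a B) L) = hd (tp (B + mset L) (cp a y))"
    using Cons.prems by (simp add: Z_last hd_tp cp_ne cpa)
  show ?case using rwalk_append[OF w1 w2] j by simp
qed

lemma Z_walk: "set L \<subseteq> V \<Longrightarrow> set_mset B \<subseteq> V \<Longrightarrow> size B + length L = n \<Longrightarrow> walk (Z a B L)"
  using Z_rwalk walk_rwalk by auto

lemma Z_plus: "Z a (B + C) L = map (\<lambda>M. M + C) (Z a B L)"
proof (induction L arbitrary: B)
  case (Cons y L)
  have "Z a (add_mset a (B + C)) L = map (\<lambda>M. M + C) (Z a (add_mset a B) L)"
    using Cons.IH[of "add_mset a B"] by simp
  moreover have "tp (B + C + mset L) (cp a y) = map (\<lambda>M. M + C) (tp (B + mset L) (cp a y))"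
    by (simp add: tp_plus ac_simps)
  ultimately show ?case by simp
qed simp

lemma Z_swap:
  assumes "set (y # z # L) \<subseteq> V" "set_mset B \<subseteq> V" "size B + length L + 2 = n"
  shows "hrel (Z a B (y # z # L)) (Z a B (z # y # L))"
proof -
  define S where "S = B + mset L"
  have P: "rwalk (size S + 1) (tp S (cp a z))" using assms by (intro rwalk_tp cpa) (auto simp: S_def)
  have Q: "rwalk 1 (tp {#} (cp a y))" using assms by (intro rwalk_tp cpa) auto
  have sz: "size S + 1 + 1 = n" using assms by (simp add: S_def)
  have pg: "hrel (map (\<lambda>p. p + hd (tp {#} (cp a y))) (tp S (cp a z)) @ map (\<lambda>q. last (tp S (cp a z)) + q) (tp {#} (cp a y)))
     (map (\<lambda>q. hd (tp S (cp a z)) + q) (tp {#} (cp a y)) @ map (\<lambda>p. p + last (tp {#} (cp a y))) (tp S (cp a z)))"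
    by (rule PG[OF P Q sz])
  have yz: "y \<in> V" "z \<in> V" using assms by auto
  have pg2: "hrel (tp (add_mset a S) (cp a z) @ tp (add_mset z S) (cp a y))
       (tp (add_mset a S) (cp a y) @ tp (add_mset y S) (cp a z))"
  proof -
    have e1: "map (\<lambda>p. p + hd (tp {#} (cp a y))) (tp S (cp a z)) = tp (add_mset a S) (cp a z)"
      using yz by (simp add: tp_def hd_map last_map cp_ne cpa)
    have e2: "map (\<lambda>q. last (tp S (cp a z)) + q) (tp {#} (cp a y)) = tp (add_mset z S) (cp a y)"
      using yz by (simp add: tp_def hd_map last_map cp_ne cpa)
    have e3: "map (\<lambda>q. hd (tp S (cp a z)) + q) (tp {#} (cp a y)) = tp (add_mset a S) (cp a y)"
      using yz by (simp add: tp_def hd_map last_map cp_ne cpa)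
    have e4: "map (\<lambda>p. p + last (tp {#} (cp a y))) (tp S (cp a z)) = tp (add_mset y S) (cp a z)"
      using yz by (simp add: tp_def hd_map last_map cp_ne cpa)
    show ?thesis using pg by (simp only: e1 e2 e3 e4)
  qed
  have wu: "walk (Z a (add_mset a (add_mset a B)) L)" using assms aV by (intro Z_walk) auto
  have l: "last (Z a (add_mset a (add_mset a B)) L) = hd (tp (add_mset a S) (cp a z))"
    using assms yz by (simp add: Z_last hd_tp cp_ne cpa S_def)
  have "hrel (Z a (add_mset a (add_mset a B)) L @ tp (add_mset a S) (cp a z) @ tp (add_mset z S) (cp a y))
    (Z a (add_mset a (add_mset a B)) L @ tp (add_mset a S) (cp a y) @ tp (add_mset y S) (cp a z))"
    using hrel_congL[OF pg2 wu] l yz by (simp add: hd_tp cp_ne)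
  then show ?thesis by (simp add: S_def)
qed

end
end



context rp begin

lemma hrel_congL': "hrel p q \<Longrightarrow> walk u \<Longrightarrow> last u = hd p \<Longrightarrow> hrel (u@p) (u@q)"
  by (rule hrel_congL) auto
lemma hrel_congR': "hrel p q \<Longrightarrow> walk u \<Longrightarrow> last p = hd u \<Longrightarrow> hrel (p@u) (q@u)"
  by (rule hrel_congR) auto

lemma walk_appD: "walk (p @ q) \<Longrightarrow> p \<noteq> [] \<Longrightarrow> walk p"
  "walk (p @ q) \<Longrightarrow> q \<noteq> [] \<Longrightarrow> walk q"
  by (auto simp: walk_append)

context
  fixes a assumes conn: "connected_graph V E" and aV: "a \<in> V"
begin

lemma tp_walk: "gwalk c \<Longrightarrow> set_mset S \<subseteq> V \<Longrightarrow> size S + 1 = n \<Longrightarrow> walk (tp S c)"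
  using rwalk_tp walk_rwalk by auto

lemma Z_cong_tail:
  assumes "hrel (Z a (add_mset a B) L) (Z a (add_mset a B) L')" "mset L = mset L'"
    "set (y # L) \<subseteq> V" "set_mset B \<subseteq> V" "size B + length L + 1 = n"
  shows "hrel (Z a B (y # L)) (Z a B (y # L'))"
proof -
  have w: "walk (tp (B + mset L) (cp a y))" using assms(3-5) by (intro tp_walk cpa[OF conn aV]) auto
  have "last (Z a (add_mset a B) L) = hd (tp (B + mset L) (cp a y))"
    using assms by (simp add: Z_last[OF conn aV] hd_tp cp_ne[OF conn aV] cpa[OF conn aV])
  then have h: "hrel (Z a (add_mset a B) L @ tp (B + mset L) (cp a y)) (Z a (add_mset a B) L' @ tp (B + mset L) (cp a y))"
    by (rule hrel_congR'[OF assms(1) w])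
  show ?thesis using h by (simp only: Z.simps assms(2))
qed

lemma Z_move:
  assumes "set (L2 @ y # L3) \<subseteq> V" "set_mset B \<subseteq> V" "size B + length L2 + length L3 + 1 = n"
  shows "hrel (Z a B (L2 @ y # L3)) (Z a B (y # L2 @ L3))"
  using assms
proof (induction L2 arbitrary: B)
  case Nil
  have "walk (Z a B (y # L3))" by (rule Z_walk[OF conn aV]) (use Nil.prems in auto)
  then show ?case by (simp add: hrel_refl)
next
  case (Cons x L2)
  have IH: "hrel (Z a (add_mset a B) (L2 @ y # L3)) (Z a (add_mset a B) (y # L2 @ L3))"
    using Cons.IH[of "add_mset a B"] Cons.prems aV by auto
  have s1: "hrel (Z a B (x # L2 @ y # L3)) (Z a B (x # y # L2 @ L3))"
    by (rule Z_cong_tail[OF IH]) (use Cons.prems in auto)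
  have s2: "hrel (Z a B (x # y # L2 @ L3)) (Z a B (y # x # L2 @ L3))"
    by (rule Z_swap[OF conn aV]) (use Cons.prems in auto)
  show ?case using hrel_trans[OF s1 s2] by simp
qed

lemma Z_perm:
  assumes "mset L = mset L'" "set L \<subseteq> V" "set_mset B \<subseteq> V" "size B + length L = n"
  shows "hrel (Z a B L) (Z a B L')"
  using assms
proof (induction L arbitrary: L' B)
  case Nil then have "L' = []" by simp
  have "walk (Z a B [])" by (rule Z_walk[OF conn aV]) (use Nil.prems in auto)
  then show ?case using \<open>L' = []\<close> by (simp add: hrel_refl)
next
  case (Cons y L1)
  have "y \<in> set L'" using Cons.prems(1) by (metis list.set_intros(1) set_mset_mset)
  then obtain L2 L3 where L': "L' = L2 @ y # L3" by (metis split_list)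
  have m: "mset L1 = mset (L2 @ L3)" using Cons.prems(1) L' by simp
  have IH: "hrel (Z a (add_mset a B) L1) (Z a (add_mset a B) (L2 @ L3))"
    using Cons.IH[OF m] Cons.prems aV by auto
  have s1: "hrel (Z a B (y # L1)) (Z a B (y # L2 @ L3))"
    by (rule Z_cong_tail[OF IH m]) (use Cons.prems in auto)
  have sL': "set L' = set (y # L1)" using Cons.prems(1) by (metis set_mset_mset)
  have l: "length L' = length (y # L1)" using Cons.prems(1) by (metis size_mset)
  have s2: "hrel (Z a B (L2 @ y # L3)) (Z a B (y # L2 @ L3))"
    by (rule Z_move) (use Cons.prems L' sL' l in auto)
  show ?case using hrel_trans[OF s1 hrel_sym[OF s2]] L' by simp
qed

end
end



context rp begin

lemma walk_rev: "walk q \<Longrightarrow> walk (rev q)"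
  unfolding walk_def by (auto elim: successively_mono simp: adj_sym)

lemma rwalk_rev: "rwalk k q \<Longrightarrow> rwalk k (rev q)"
  unfolding rwalk_def by (auto elim: successively_mono simp: radj_def radj_sym)

lemma gwalk_app: "gwalk c \<Longrightarrow> gwalk d \<Longrightarrow> gadj (last c) (hd d) \<Longrightarrow> gwalk (c @ d)"
  by (auto simp: gwalk_def successively_append_iff)

lemma gwalk_rev: "gwalk c \<Longrightarrow> gwalk (rev c)"
  unfolding gwalk_def by (auto elim: successively_mono simp: gadj_def Esym)

lemma W_mem: "M \<in> reduced_power_verts V n \<longleftrightarrow> set_mset M \<subseteq> V \<and> size M = n"
  by (simp add: reduced_power_verts_def)

context
  fixes a x0 assumes conn: "connected_graph V E" and aV: "a \<in> V"
    and ax: "a \<in># x0" and x0W: "x0 \<in> reduced_power_verts V n"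
begin

definition "R = x0 - {#a#}"
definition "LR = (SOME L. mset L = R)"
definition "X = rev (Z a {#a#} LR)"

lemma R_eq: "R = x0 - {#a#}" by (simp add: R_def)

lemma LR: "mset LR = R" unfolding LR_def by (rule someI_ex) (rule ex_mset)
lemma x0R: "x0 = add_mset a R" using ax by (simp add: R_def)
lemma x0V: "set_mset x0 \<subseteq> V" "size x0 = n" using x0W by (auto simp: W_mem)
lemma RV: "set_mset R \<subseteq> V" "size R + 1 = n"
proof -
  have "set_mset (add_mset a R) \<subseteq> V \<and> size (add_mset a R) = n" using x0V by (simp only: x0R[symmetric])
  then show "set_mset R \<subseteq> V" "size R + 1 = n" by auto
qed
lemma LRV: "set LR \<subseteq> V" "length LR + 1 = n" using RV LR by (metis set_mset_mset, metis size_mset)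

lemma Zp: "walk (Z a {#a#} LR)" "hd (Z a {#a#} LR) = replicate_mset n a" "last (Z a {#a#} LR) = x0"
  using Z_walk[OF conn aV LRV(1)] LRV aV Z_hd Z_last[OF conn aV LRV(1)] LR x0R
  by auto

lemma Xp: "walk X" "hd X = x0" "last X = replicate_mset n a"
  using Zp walk_rev by (auto simp: X_def hd_rev last_rev)

lemma XZ: assumes "mset L = x0" "set L \<subseteq> V" shows "hrel (X @ Z a {#} L) [x0]"
proof -
  have lL: "length L = n" using assms x0V by (metis size_mset)
  have p: "hrel (Z a {#} L) (Z a {#} (a # LR))"
    by (rule Z_perm[OF conn aV]) (use assms lL LR x0R in auto)
  have e: "Z a {#} (a # LR) = Z a {#a#} LR @ [x0]"
    using cpa[OF conn aV] LR x0R by (simp add: tp_def)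
  have d: "hrel (Z a {#a#} LR @ [x0]) (Z a {#a#} LR)" using dup_last[OF Zp(1)] Zp(3) by simp
  have q: "hrel (Z a {#} L) (Z a {#a#} LR)" using hrel_trans[OF p] e d by simp
  have c1: "hrel (X @ Z a {#} L) (X @ Z a {#a#} LR)"
    by (rule hrel_congL'[OF q Xp(1)]) (simp add: Xp Z_hd lL)
  have c2: "hrel (X @ Z a {#a#} LR) [x0]" using canc[OF Xp(1)] Xp by (simp add: X_def)
  show ?thesis using hrel_trans[OF c1 c2] .
qed


lemma PG1:
  assumes L1: "set L1 \<subseteq> V" "length L1 + 1 = n" and b: "gwalk \<beta>" "hd \<beta> = a" "last \<beta> = a"
  shows "hrel (Z a {#a#} L1 @ tp (mset L1) \<beta>) (tp (replicate_mset (n-1) a) \<beta> @ Z a {#a#} L1)"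
proof -
  have nl: "n - 1 = length L1" using L1 by arith
  have P: "rwalk (n-1) (Z a {#} L1)" using Z_rwalk[OF conn aV L1(1), of "{#}"] nl by simp
  have Q: "rwalk 1 (tp {#} \<beta>)" using b by (intro rwalk_tp) (auto simp: gwalk_def)
  have nn: "n - 1 + 1 = n" using L1 by simp
  have bne: "\<beta> \<noteq> []" using b by (simp add: gwalk_def)
  have pg: "hrel (map (\<lambda>p. p + hd (tp {#} \<beta>)) (Z a {#} L1) @ map (\<lambda>q. last (Z a {#} L1) + q) (tp {#} \<beta>))
     (map (\<lambda>q. hd (Z a {#} L1) + q) (tp {#} \<beta>) @ map (\<lambda>p. p + last (tp {#} \<beta>)) (Z a {#} L1))"
    by (rule PG[OF P Q nn])
  have z: "Z a {#a#} L1 = map (\<lambda>p. p + {#a#}) (Z a {#} L1)" using Z_plus[OF conn aV, of "{#}" "{#a#}" L1] by simp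
  have e1: "map (\<lambda>p. p + hd (tp {#} \<beta>)) (Z a {#} L1) = Z a {#a#} L1" using z bne b by (simp add: hd_tp)
  have e4: "map (\<lambda>p. p + last (tp {#} \<beta>)) (Z a {#} L1) = Z a {#a#} L1" using z bne b by (simp add: last_tp)
  have e2: "map (\<lambda>q. last (Z a {#} L1) + q) (tp {#} \<beta>) = tp (mset L1) \<beta>"
    using Z_last[OF conn aV L1(1)] tp_single by simp
  have e3: "map (\<lambda>q. hd (Z a {#} L1) + q) (tp {#} \<beta>) = tp (replicate_mset (n-1) a) \<beta>"
    using Z_hd tp_single L1 by (metis add_diff_cancel_right' add_0)
  show ?thesis using pg by (simp only: e1 e2 e3 e4)
qed

lemma PG2:
  assumes b: "gwalk \<beta>" "hd \<beta> = a" "last \<beta> = a"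
  shows "hrel (X @ tp (replicate_mset (n-1) a) \<beta>) (tp R \<beta> @ X)"
proof -
  have nl: "n - 1 = length LR" using LRV by arith
  have P: "rwalk (n-1) (rev (Z a {#} LR))" using Z_rwalk[OF conn aV LRV(1), of "{#}"] nl rwalk_rev by simp
  have Q: "rwalk 1 (tp {#} \<beta>)" using b by (intro rwalk_tp) (auto simp: gwalk_def)
  have nn: "n - 1 + 1 = n" using LRV by simp
  have bne: "\<beta> \<noteq> []" using b by (simp add: gwalk_def)
  have pg: "hrel (map (\<lambda>p. p + hd (tp {#} \<beta>)) (rev (Z a {#} LR)) @ map (\<lambda>q. last (rev (Z a {#} LR)) + q) (tp {#} \<beta>))
     (map (\<lambda>q. hd (rev (Z a {#} LR)) + q) (tp {#} \<beta>) @ map (\<lambda>p. p + last (tp {#} \<beta>)) (rev (Z a {#} LR)))"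
    by (rule PG[OF P Q nn])
  have z: "X = map (\<lambda>p. p + {#a#}) (rev (Z a {#} LR))" using Z_plus[OF conn aV, of "{#}" "{#a#}" LR]
    by (simp add: X_def rev_map)
  have e1: "map (\<lambda>p. p + hd (tp {#} \<beta>)) (rev (Z a {#} LR)) = X" using z bne b by (simp add: hd_tp)
  have e4: "map (\<lambda>p. p + last (tp {#} \<beta>)) (rev (Z a {#} LR)) = X" using z bne b by (simp add: last_tp)
  have e2: "map (\<lambda>q. last (rev (Z a {#} LR)) + q) (tp {#} \<beta>) = tp (replicate_mset (n-1) a) \<beta>"
    using Z_hd tp_single nl by (simp add: last_rev)
  have e3: "map (\<lambda>q. hd (rev (Z a {#} LR)) + q) (tp {#} \<beta>) = tp R \<beta>"
    using Z_last[OF conn aV LRV(1)] tp_single LR by (simp add: hd_rev)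
  show ?thesis using pg by (simp only: e1 e2 e3 e4)
qed


lemma rep_n: "replicate_mset n a = add_mset a (replicate_mset (n-1) a)"
  using RV(2) by (metis add_diff_cancel_right' replicate_mset_Suc Suc_eq_plus1)

lemma inv:
  assumes "walk P" "hd P = x0"
  shows "\<exists>\<alpha> L. gwalk \<alpha> \<and> hd \<alpha> = a \<and> last \<alpha> = a \<and> mset L = last P \<and> set L \<subseteq> V \<and> hrel P (tp R \<alpha> @ X @ Z a {#} L)"
  using assms
proof (induction P rule: rev_induct)
  case Nil then show ?case by (simp add: walk_def)
next
  case (snoc M' P0)
  have x0W': "walk [x0]" using x0W by (simp add: walk_def)
  have Xne: "X \<noteq> []" using Xp(1) by (simp add: walk_def)
  show ?case
  proof (cases "P0 = []")
    case True
    then have M': "M' = x0" using snoc.prems by simp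
    define L where "L = a # LR"
    have mL: "mset L = x0" "set L \<subseteq> V" using LR x0R LRV aV by (auto simp: L_def)
    have xz: "hrel (X @ Z a {#} L) [x0]" by (rule XZ[OF mL])
    have c: "hrel ([x0] @ X @ Z a {#} L) ([x0] @ [x0])"
      by (rule hrel_congL'[OF xz x0W']) (simp add: Xp Xne)
    have d: "hrel ([x0] @ [x0]) [x0]" using dup_last[OF x0W'] by simp
    have t: "tp R [a] = [x0]" using x0R by (simp add: tp_def)
    have hh: "hrel [x0] (tp R [a] @ X @ Z a {#} L)" using hrel_sym[OF hrel_trans[OF c d]] t by simp
    show ?thesis
      by (rule exI[of _ "[a]"], rule exI[of _ L]) (use hh M' True mL aV in \<open>auto simp: gwalk_def\<close>)
  next
    case False
    have wP0: "walk P0" using snoc.prems(1) False walk_appD by blast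
    have hP0: "hd P0 = x0" using snoc.prems(2) False by simp
    obtain \<alpha> L where IH: "gwalk \<alpha>" "hd \<alpha> = a" "last \<alpha> = a" "mset L = last P0" "set L \<subseteq> V"
      "hrel P0 (tp R \<alpha> @ X @ Z a {#} L)"
      using snoc.IH[OF wP0 hP0] by blast
    define M where "M = last P0"
    have aMM': "adj M M'" using snoc.prems(1) False by (auto simp: M_def walk_def successively_append_iff)
    have M'W: "M' \<in> reduced_power_verts V n" using snoc.prems(1) by (simp add: walk_def)
    have MW: "M \<in> reduced_power_verts V n" using wP0 by (auto simp: walk_def M_def)
    have lL: "length L = n" using IH(4) MW M_def by (metis W_mem size_mset)
    have wRHS: "walk (tp R \<alpha> @ X @ Z a {#} L)" using hrel_inv[OF IH(6)] by simp
    show ?thesis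
    proof (cases "M' = M")
      case True
      have hh: "hrel (P0 @ [M']) P0" using dup_last[OF wP0] True M_def by simp
      show ?thesis
        by (rule exI[of _ \<alpha>], rule exI[of _ L]) (use hrel_trans[OF hh IH(6)] IH True M_def in auto)
    next
      case False
      then have "reduced_power_adj E M M'" using aMM' by (simp add: adj_def)
      then obtain v w where vw: "v \<in># M" "E v w" "M' = M - {#v#} + {#w#}"
        by (auto simp: reduced_power_adj_def)
      define L1 where "L1 = remove1 v L"
      define S where "S = mset L1"
      have vL: "v \<in> set L" using vw(1) IH(4) M_def by (metis set_mset_mset)
      have MS: "M = add_mset v S" using vL IH(4) M_def vw(1) by (simp add: S_def L1_def)
      have M'S: "M' = add_mset w S" using vw(3) MS by simp
      have vV: "v \<in> V" "w \<in> V" using EV vw(2) by auto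
      have L1V: "set L1 \<subseteq> V" "length L1 + 1 = n"
        using IH(5) set_remove1_subset[of v L] vL lL length_pos_if_in_set[OF vL]
        by (auto simp: L1_def length_remove1)
      have SV: "set_mset S \<subseteq> V" "size S + 1 = n" using L1V by (auto simp: S_def)
      have hp: "hrel (Z a {#} L) (Z a {#} (v # L1))"
        by (rule Z_perm[OF conn aV]) (use vL IH(5) lL in \<open>auto simp: L1_def\<close>)
      have Zv: "Z a {#} (v # L1) = Z a {#a#} L1 @ tp S (cp a v)" by (simp add: S_def)
      define U where "U = tp R \<alpha> @ X"
      have wU: "walk U" using wRHS Xne by (auto simp: U_def walk_append)
      have lU: "last U = replicate_mset n a" by (simp add: U_def Xp Xne)
      have hZ: "hd (Z a {#} L) = replicate_mset n a" using Z_hd lL by simp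
      have sA0: "hrel P0 (U @ Z a {#} L)" using IH(6) by (simp add: U_def)
      have sA: "hrel P0 (U @ Z a {#a#} L1 @ tp S (cp a v))"
        using hrel_trans[OF sA0 hrel_congL'[OF hp wU]] lU hZ Zv by simp
      have wM': "walk [M']" using M'W by (simp add: walk_def)
      have lcv: "last (tp S (cp a v)) = M" using MS by (simp add: last_tp cp_ne[OF conn aV] cpa[OF conn aV] vV)
      have sB: "hrel (P0 @ [M']) ((U @ Z a {#a#} L1 @ tp S (cp a v)) @ [M'])"
        by (rule hrel_congR[OF sA wM']) (use aMM' M_def lcv in simp)
      define T where "T = tp S (cp a w)"
      have wT: "walk T" unfolding T_def by (rule tp_walk[OF conn aV]) (use SV cpa[OF conn aV] vV in auto)
      have Tne: "T \<noteq> []" using wT by (simp add: walk_def)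
      have lT: "last T = M'" using M'S by (simp add: T_def last_tp cp_ne[OF conn aV] cpa[OF conn aV] vV)
      have cT: "hrel (rev T @ T) [M']" using canc[OF walk_rev[OF wT]] lT Tne by (simp add: hd_rev)
      have wcv: "walk (tp S (cp a v))" by (rule tp_walk[OF conn aV]) (use SV cpa[OF conn aV] vV in auto)
      have sC0: "hrel (tp S (cp a v) @ rev T @ T) (tp S (cp a v) @ [M'])"
        by (rule hrel_congL[OF cT wcv]) (use aMM' lcv lT Tne in \<open>simp add: hd_rev\<close>)
      define \<beta> where "\<beta> = cp a v @ rev (cp a w)"
      have e\<beta>: "tp S \<beta> @ T = tp S (cp a v) @ rev T @ T" by (simp add: \<beta>_def T_def tp_app tp_rev)
      define U2 where "U2 = U @ Z a {#a#} L1"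
      have wU2: "walk U2" using hrel_inv[OF sA] by (auto simp: U2_def walk_append)
      have lU2: "last U2 = add_mset a S" using Z_last[OF conn aV L1V(1)] by (simp add: U2_def S_def)
      have sD: "hrel (U2 @ tp S (cp a v) @ [M']) (U2 @ tp S \<beta> @ T)"
        by (rule hrel_congL'[OF _ wU2]) (use hrel_sym[OF sC0] e\<beta> lU2 in
            \<open>simp_all add: hd_tp cp_ne[OF conn aV] cpa[OF conn aV] vV\<close>)
      have g\<beta>: "gwalk \<beta>" "hd \<beta> = a" "last \<beta> = a"
        using cpa[OF conn aV] vV vw(2) cp_ne[OF conn aV]
        by (auto simp: \<beta>_def gadj_def intro!: gwalk_app gwalk_rev simp: hd_rev last_rev)
      define Rn where "Rn = replicate_mset (n-1) a"
      have pe: "hrel (Z a {#a#} L1 @ tp S \<beta>) (tp Rn \<beta> @ Z a {#a#} L1)"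
        using PG1[OF L1V g\<beta>] by (simp add: S_def Rn_def)
      have bne: "\<beta> \<noteq> []" using g\<beta> by (simp add: gwalk_def)
      have hT: "hd T = add_mset a S" by (simp add: T_def hd_tp cp_ne[OF conn aV] cpa[OF conn aV] vV)
      have sE1: "hrel ((Z a {#a#} L1 @ tp S \<beta>) @ T) ((tp Rn \<beta> @ Z a {#a#} L1) @ T)"
        by (rule hrel_congR'[OF pe wT]) (use bne g\<beta> hT in \<open>simp add: last_tp\<close>)
      have nL1: "n - 1 = length L1" using L1V by arith
      have hZ1: "hd (Z a {#a#} L1) = replicate_mset n a" using Z_hd rep_n nL1 by simp
      have sE: "hrel (U @ (Z a {#a#} L1 @ tp S \<beta>) @ T) (U @ (tp Rn \<beta> @ Z a {#a#} L1) @ T)"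
        by (rule hrel_congL'[OF sE1 wU]) (use lU hZ1 in simp)
      have pf: "hrel (X @ tp Rn \<beta>) (tp R \<beta> @ X)" using PG2[OF g\<beta>] by (simp add: Rn_def)
      define Z1T where "Z1T = Z a {#a#} L1 @ T"
      have ZwL: "Z a {#} (w # L1) = Z1T" unfolding Z1T_def T_def S_def by simp
      have wZ1T: "walk Z1T" unfolding ZwL[symmetric] by (rule Z_walk[OF conn aV]) (use L1V vV in auto)
      have sF1: "hrel ((X @ tp Rn \<beta>) @ Z1T) ((tp R \<beta> @ X) @ Z1T)"
        by (rule hrel_congR'[OF pf wZ1T]) (use bne g\<beta> hZ1 rep_n in \<open>simp add: last_tp Z1T_def Rn_def\<close>)
      have wt\<alpha>: "walk (tp R \<alpha>)" by (rule tp_walk[OF conn aV]) (use IH(1) RV in auto)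
      have \<alpha>ne: "\<alpha> \<noteq> []" using IH(1) by (simp add: gwalk_def)
      have sF: "hrel (tp R \<alpha> @ (X @ tp Rn \<beta>) @ Z1T) (tp R \<alpha> @ (tp R \<beta> @ X) @ Z1T)"
        by (rule hrel_congL'[OF sF1 wt\<alpha>]) (use \<alpha>ne IH(3) x0R Xp Xne in \<open>simp add: last_tp\<close>)
      have q1: "(U @ Z a {#a#} L1 @ tp S (cp a v)) @ [M'] = U2 @ tp S (cp a v) @ [M']" by (simp add: U2_def)
      have q2: "U2 @ tp S \<beta> @ T = U @ (Z a {#a#} L1 @ tp S \<beta>) @ T" by (simp add: U2_def)
      have q3: "U @ (tp Rn \<beta> @ Z a {#a#} L1) @ T = tp R \<alpha> @ (X @ tp Rn \<beta>) @ Z1T" by (simp add: U_def Z1T_def)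
      have q4: "tp R \<alpha> @ (tp R \<beta> @ X) @ Z1T = tp R (\<alpha> @ \<beta>) @ X @ Z a {#} (w # L1)" unfolding Z1T_def T_def S_def by (simp add: tp_app)
      have fin: "hrel (P0 @ [M']) (tp R (\<alpha> @ \<beta>) @ X @ Z a {#} (w # L1))"
        using hrel_trans[OF hrel_trans[OF hrel_trans[OF sB[unfolded q1] sD[unfolded q2]] sE[unfolded q3]] sF[unfolded q4]] .
      have g\<alpha>\<beta>: "gwalk (\<alpha> @ \<beta>)" using IH(1,3) g\<beta> by (intro gwalk_app) (auto simp: gadj_def)
      show ?thesis
        by (rule exI[of _ "\<alpha> @ \<beta>"], rule exI[of _ "w # L1"]) (use fin g\<alpha>\<beta> \<alpha>ne bne IH(2) g\<beta> M'S S_def L1V vV in auto)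
    qed
  qed
qed

theorem NF:
  assumes "walk P" "hd P = x0" "last P = x0"
  shows "\<exists>\<alpha>. gwalk \<alpha> \<and> hd \<alpha> = a \<and> last \<alpha> = a \<and> hrel P (tp R \<alpha>)"
proof -
  obtain \<alpha> L where I: "gwalk \<alpha>" "hd \<alpha> = a" "last \<alpha> = a" "mset L = x0" "set L \<subseteq> V"
      "hrel P (tp R \<alpha> @ X @ Z a {#} L)" using inv[OF assms(1,2)] assms(3) by auto
  have xz: "hrel (X @ Z a {#} L) [x0]" by (rule XZ[OF I(4,5)])
  have wt\<alpha>: "walk (tp R \<alpha>)" by (rule tp_walk[OF conn aV]) (use I(1) RV in auto)
  have \<alpha>ne: "\<alpha> \<noteq> []" using I(1) by (simp add: gwalk_def)
  have Xne: "X \<noteq> []" using Xp(1) by (simp add: walk_def)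
  have lt: "last (tp R \<alpha>) = x0" using \<alpha>ne I(3) x0R by (simp add: last_tp)
  have c: "hrel (tp R \<alpha> @ X @ Z a {#} L) (tp R \<alpha> @ [x0])"
    by (rule hrel_congL'[OF xz wt\<alpha>]) (use lt Xp Xne in simp)
  have d: "hrel (tp R \<alpha> @ [x0]) (tp R \<alpha>)" using dup_last[OF wt\<alpha>] lt by simp
  show ?thesis using hrel_trans[OF hrel_trans[OF I(6) c] d] I by blast
qed

end
end



context grph begin

lemma bl_shift: assumes "based_loop W A x0 f" shows "based_loop W A x0 (\<lambda>i. f (i + c))"
proof -
  obtain N :: nat where N: "\<forall>i. int N \<le> \<bar>i\<bar> \<longrightarrow> f i = x0" using assms by (auto simp: based_loop_def)
  have "\<forall>i. int (N + nat \<bar>c\<bar>) \<le> \<bar>i\<bar> \<longrightarrow> f (i + c) = x0" using N by (auto intro!: N[rule_format])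
  moreover have "\<forall>i. f (i + c) = f (i + 1 + c) \<or> A (f (i + c)) (f (i + 1 + c))"
    using assms unfolding based_loop_def by (metis add.commute add.left_commute)
  ultimately show ?thesis using assms unfolding based_loop_def by blast
qed

lemma bl_shiftm: assumes "based_loop W A x0 f" shows "based_loop W A x0 (\<lambda>i. f (i - c))"
  using bl_shift[OF assms, of "-c"] by simp

lemma H_shift: assumes "based_loop W A x0 f" shows "H x0 f (\<lambda>i. f (i - int k))"
proof (induction k)
  case 0 then show ?case using H_refl assms by simp
next
  case (Suc k)
  have b1: "based_loop W A x0 (\<lambda>i. f (i - int k))" by (rule bl_shiftm[OF assms])
  have b2: "based_loop W A x0 (\<lambda>i. f (i - int (Suc k)))" by (rule bl_shiftm[OF assms])
  have "H x0 (\<lambda>i. f (i - int k)) (\<lambda>i. f (i - int (Suc k)))"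
  proof (rule H_step[OF b1 b2])
    fix i
    have "f (i - int (Suc k)) = f (i - int (Suc k) + 1) \<or> A (f (i - int (Suc k))) (f (i - int (Suc k) + 1))"
      using assms unfolding based_loop_def by blast
    then show "adj (f (i - int k)) (f (i - int (Suc k)))" using adj_sym by (auto simp: adj_def)
  qed
  then show ?case using Suc H_trans by blast
qed

lemma radius: assumes "based_loop W A x0 f" shows "\<forall>i. int (loop_radius x0 f) \<le> \<bar>i\<bar> \<longrightarrow> f i = x0"
proof -
  have "\<exists>N::nat. \<forall>i. int N \<le> \<bar>i\<bar> \<longrightarrow> f i = x0" using assms by (auto simp: based_loop_def)
  then show ?thesis unfolding loop_radius_def by (rule LeastI_ex)
qed

definition lst :: "'v \<Rightarrow> (int \<Rightarrow> 'v) \<Rightarrow> 'v list" where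
  "lst x0 f = map (\<lambda>k. f (int k - int (loop_radius x0 f))) [0..<Suc (2 * loop_radius x0 f)]"

lemma lst_len: "length (lst x0 f) = Suc (2 * loop_radius x0 f)" by (simp add: lst_def)
lemma lst_nth: "k < Suc (2 * loop_radius x0 f) \<Longrightarrow> lst x0 f ! k = f (int k - int (loop_radius x0 f))"
  by (simp add: lst_def del: upt_Suc)

lemma lst: assumes "based_loop W A x0 f"
  shows "walk (lst x0 f)" "hd (lst x0 f) = x0" "last (lst x0 f) = x0"
proof -
  let ?r = "loop_radius x0 f"
  have rad: "\<And>i. int ?r \<le> \<bar>i\<bar> \<Longrightarrow> f i = x0" using radius[OF assms] by blast
  show "walk (lst x0 f)" unfolding lst_def
  proof (rule walk_map_upt)
    fix i show "f (int i - int ?r) \<in> W" using assms by (simp add: based_loop_def)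
  next
    fix i
    have "f (int i - int ?r) = f (int i - int ?r + 1) \<or> A (f (int i - int ?r)) (f (int i - int ?r + 1))"
      using assms unfolding based_loop_def by blast
    moreover have e: "int (Suc i) - int ?r = int i - int ?r + 1" by simp
    ultimately show "adj (f (int i - int ?r)) (f (int (Suc i) - int ?r))" unfolding e adj_def by blast
  qed
  show "hd (lst x0 f) = x0" using rad[of "- int ?r"] by (simp add: lst_def del: upt_Suc)
  show "last (lst x0 f) = x0" using rad[of "int ?r"] by (simp add: lst_def del: upt_Suc)
qed

lemma concat_eq:
  assumes f: "based_loop W A x0 f" and g: "based_loop W A x0 g"
  shows "loop_concat x0 f g i = loop_of x0 (lst x0 f @ tl (lst x0 g)) (i + 2 * int (loop_radius x0 f))"
proof -
  define rf where "rf = loop_radius x0 f"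
  define rg where "rg = loop_radius x0 g"
  have radf: "\<And>i. int rf \<le> \<bar>i\<bar> \<Longrightarrow> f i = x0" using radius[OF f] rf_def by blast
  have radg: "\<And>i. int rg \<le> \<bar>i\<bar> \<Longrightarrow> g i = x0" using radius[OF g] rg_def by blast
  have lf: "length (lst x0 f) = Suc (2 * rf)" by (simp add: lst_len rf_def)
  have lg: "length (tl (lst x0 g)) = 2 * rg" by (simp add: lst_len rg_def)
  have nf: "\<And>k. k < Suc (2 * rf) \<Longrightarrow> lst x0 f ! k = f (int k - int rf)" using lst_nth rf_def by blast
  have ng: "\<And>k. k < 2 * rg \<Longrightarrow> tl (lst x0 g) ! k = g (int k + 1 - int rg)"
    using lst_nth[of _ x0 g] rg_def by (simp add: nth_tl lst_len algebra_simps)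
  define j where "j = i + 2 * int rf"
  have L: "loop_concat x0 f g i = (if i \<le> 0 then f (i + int rf) else g (i - int rg))"
    by (simp add: loop_concat_def rf_def rg_def)
  show ?thesis
  proof (cases "i \<le> 0")
    case True
    show ?thesis
    proof (cases "j < 0")
      case True
      then have "int rf \<le> \<bar>i + int rf\<bar>" by (simp add: j_def)
      then show ?thesis using True \<open>i \<le> 0\<close> radf[of "i + int rf"] L
        by (simp add: loop_of_def j_def[symmetric] rf_def[symmetric])
    next
      case False
      then have jr: "nat j < Suc (2 * rf)" "int (nat j) = j" using \<open>i \<le> 0\<close> by (auto simp: j_def)
      have "loop_of x0 (lst x0 f @ tl (lst x0 g)) j = f (i + int rf)"
        using jr lf nf[OF jr(1)] False \<open>i \<le> 0\<close> by (simp add: loop_of_def nth_append j_def add.commute)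
      then show ?thesis using L \<open>i \<le> 0\<close> by (simp add: j_def rf_def)
    qed
  next
    case False
    then have jj: "nat j \<ge> Suc (2 * rf)" "int (nat j) = j" by (auto simp: j_def)
    show ?thesis
    proof (cases "i \<le> 2 * int rg")
      case True
      have k: "nat j - Suc (2 * rf) < 2 * rg" "int (nat j - Suc (2 * rf)) = i - 1" using True False jj
        by (auto simp: j_def)
      have "loop_of x0 (lst x0 f @ tl (lst x0 g)) j = g (i - int rg)"
        using jj k lf lg ng[OF k(1)] True False by (auto simp: loop_of_def nth_append)
      then show ?thesis using L False by (simp add: j_def rf_def)
    next
      case F2: False
      have "loop_of x0 (lst x0 f @ tl (lst x0 g)) j = x0" using F2 False lf lg by (auto simp: loop_of_def j_def)
      then show ?thesis using L False radg[of "i - int rg"] F2 by (simp add: j_def rf_def)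
    qed
  qed
qed

lemma concat_H:
  assumes x0: "x0 \<in> W" and f: "based_loop W A x0 f" and g: "based_loop W A x0 g"
  shows "H x0 (loop_concat x0 f g) (loop_of x0 (lst x0 f @ lst x0 g))"
proof -
  let ?Lf = "lst x0 f" and ?Lg = "lst x0 g"
  have wf: "walk ?Lf" "hd ?Lf = x0" "last ?Lf = x0" using lst[OF f] by auto
  have wg: "walk ?Lg" "hd ?Lg = x0" "last ?Lg = x0" using lst[OF g] by auto
  have J: "hrel (?Lf @ ?Lg) (?Lf @ tl ?Lg)" using join[OF wf(1) wg(1)] wf wg by simp
  have wfg: "walk (?Lf @ ?Lg)" "hd (?Lf @ ?Lg) = x0" "last (?Lf @ ?Lg) = x0" using hrel_inv[OF J] wf wg
    by (auto simp: walk_def)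
  have hJ: "H x0 (loop_of x0 (?Lf @ ?Lg)) (loop_of x0 (?Lf @ tl ?Lg))" using hrel_H[OF J x0 wfg(2,3)] .
  have wt: "walk (?Lf @ tl ?Lg)" "hd (?Lf @ tl ?Lg) = x0" "last (?Lf @ tl ?Lg) = x0"
    using hrel_inv[OF J] wfg by auto
  have bl: "based_loop W A x0 (loop_of x0 (?Lf @ tl ?Lg))" using bl_loop_of[OF x0 wt] .
  have bc: "based_loop W A x0 (loop_concat x0 f g)"
    using bl_shift[OF bl, of "2 * int (loop_radius x0 f)"] concat_eq[OF f g] by presburger
  have "H x0 (loop_concat x0 f g) (\<lambda>i. loop_concat x0 f g (i - int (2 * loop_radius x0 f)))"
    by (rule H_shift[OF bc])
  moreover have "(\<lambda>i. loop_concat x0 f g (i - int (2 * loop_radius x0 f))) = loop_of x0 (?Lf @ tl ?Lg)"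
    using concat_eq[OF f g] by auto
  ultimately show ?thesis using H_trans H_sym[OF hJ] by metis
qed

end



context rp begin

lemma list_comm:
  assumes conn: "connected_graph V E" and x0W: "x0 \<in> reduced_power_verts V n" and n2: "2 \<le> n"
    and p: "walk p" "hd p = x0" "last p = x0" and q: "walk q" "hd q = x0" "last q = x0"
  shows "hrel (p @ q) (q @ p)"
proof -
  have sx: "size x0 = n" "set_mset x0 \<subseteq> V" using x0W by (auto simp: W_mem)
  obtain a where a: "a \<in># x0" using sx n2 by (metis multiset_nonemptyE not_numeral_le_zero size_empty)
  have sxa: "size (x0 - {#a#}) = n - 1" using a sx by (simp add: size_Diff_submset)
  obtain b where b: "b \<in># x0 - {#a#}" using sxa n2
    by (metis multiset_nonemptyE One_nat_def Suc_1 diff_is_0_eq not_less_eq_eq size_empty)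
  have bx: "b \<in># x0" using b by (meson in_diffD)
  have aV: "a \<in> V" "b \<in> V" using a bx sx by auto
  obtain \<alpha> where A: "gwalk \<alpha>" "hd \<alpha> = a" "last \<alpha> = a" "hrel p (tp (R a x0) \<alpha>)"
    using NF[OF conn aV(1) a x0W p] by blast
  obtain \<beta> where B: "gwalk \<beta>" "hd \<beta> = b" "last \<beta> = b" "hrel q (tp (R b x0) \<beta>)"
    using NF[OF conn aV(2) bx x0W q] by blast
  define D where "D = x0 - {#a#} - {#b#}"
  have Ra: "R a x0 = add_mset b D" using insert_DiffM[OF b] R_eq[OF conn aV(1) a x0W] by (simp add: D_def)
  have Ra': "x0 - {#a#} = add_mset b D" using Ra R_eq[OF conn aV(1) a x0W] by simp
  have x0D: "x0 = add_mset a (add_mset b D)" using insert_DiffM[OF a] unfolding Ra' by simp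
  have Rb: "R b x0 = add_mset a D" using x0D R_eq[OF conn aV(2) bx x0W] by simp
  have DV: "set_mset D \<subseteq> V" "size D + 1 + 1 = n" using x0D sx by auto
  have P: "rwalk (n - 1) (tp D \<alpha>)" by (rule rwalk_tp) (use A DV in auto)
  have Q: "rwalk 1 (tp {#} \<beta>)" by (rule rwalk_tp) (use B in auto)
  have nn: "n - 1 + 1 = n" using n2 by simp
  have pg: "hrel (map (\<lambda>p. p + hd (tp {#} \<beta>)) (tp D \<alpha>) @ map (\<lambda>q. last (tp D \<alpha>) + q) (tp {#} \<beta>))
     (map (\<lambda>q. hd (tp D \<alpha>) + q) (tp {#} \<beta>) @ map (\<lambda>p. p + last (tp {#} \<beta>)) (tp D \<alpha>))"
    by (rule PG[OF P Q nn])
  have ne: "\<alpha> \<noteq> []" "\<beta> \<noteq> []" using A B by (auto simp: gwalk_def)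
  have e1: "map (\<lambda>p. p + hd (tp {#} \<beta>)) (tp D \<alpha>) = tp (R a x0) \<alpha>" using ne B Ra by (simp add: tp_def hd_map)
  have e2: "map (\<lambda>q. last (tp D \<alpha>) + q) (tp {#} \<beta>) = tp (R b x0) \<beta>" using ne A Rb by (simp add: tp_def last_map)
  have e3: "map (\<lambda>q. hd (tp D \<alpha>) + q) (tp {#} \<beta>) = tp (R b x0) \<beta>" using ne A Rb by (simp add: tp_def hd_map)
  have e4: "map (\<lambda>p. p + last (tp {#} \<beta>)) (tp D \<alpha>) = tp (R a x0) \<alpha>" using ne B Ra by (simp add: tp_def last_map)
  have c: "hrel (tp (R a x0) \<alpha> @ tp (R b x0) \<beta>) (tp (R b x0) \<beta> @ tp (R a x0) \<alpha>)"
    using pg by (simp only: e1 e2 e3 e4)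
  have s1: "hrel (p @ q) (tp (R a x0) \<alpha> @ tp (R b x0) \<beta>)" by (rule hrel_app[OF A(4) B(4)]) (simp add: p q)
  have s2: "hrel (q @ p) (tp (R b x0) \<beta> @ tp (R a x0) \<alpha>)" by (rule hrel_app[OF B(4) A(4)]) (simp add: p q)
  show ?thesis using hrel_trans[OF hrel_trans[OF s1 c] hrel_sym[OF s2]] .
qed

lemma loop_comm:
  assumes conn: "connected_graph V E" and x0W: "x0 \<in> reduced_power_verts V n" and n2: "2 \<le> n"
    and f: "based_loop (reduced_power_verts V n) (reduced_power_adj E) x0 f"
    and g: "based_loop (reduced_power_verts V n) (reduced_power_adj E) x0 g"
  shows "H x0 (loop_concat x0 f g) (loop_concat x0 g f)"
proof -
  have lf: "walk (lst x0 f)" "hd (lst x0 f) = x0" "last (lst x0 f) = x0" using lst[OF f] by auto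
  have lg: "walk (lst x0 g)" "hd (lst x0 g) = x0" "last (lst x0 g) = x0" using lst[OF g] by auto
  have h: "hrel (lst x0 f @ lst x0 g) (lst x0 g @ lst x0 f)" by (rule list_comm[OF conn x0W n2 lf lg])
  have hd1: "hd (lst x0 f @ lst x0 g) = x0" "last (lst x0 f @ lst x0 g) = x0" using lf lg by (auto simp: walk_def)
  have c1: "H x0 (loop_concat x0 f g) (loop_of x0 (lst x0 f @ lst x0 g))" by (rule concat_H[OF x0W f g])
  have c2: "H x0 (loop_concat x0 g f) (loop_of x0 (lst x0 g @ lst x0 f))" by (rule concat_H[OF x0W g f])
  have c3: "H x0 (loop_of x0 (lst x0 f @ lst x0 g)) (loop_of x0 (lst x0 g @ lst x0 f))"
    by (rule hrel_H[OF h x0W hd1])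
  show ?thesis using H_trans[OF H_trans[OF c1 c3] H_sym[OF c2]] .
qed

end

theorem proposition4p6:
  fixes V :: "'a set" and E :: "'a \<Rightarrow> 'a \<Rightarrow> bool" and n :: nat and x0 :: "'a multiset"
  assumes "simple_graph V E" and "connected_graph V E" and "locally_finite_graph V E"
    and "n \<ge> 2"
    and "x0 \<in> reduced_power_verts V n"
  shows "\<forall>X\<in>carrier (A1 (reduced_power_verts V n) (reduced_power_adj E) x0).
         \<forall>Y\<in>carrier (A1 (reduced_power_verts V n) (reduced_power_adj E) x0).
           X \<otimes>\<^bsub>A1 (reduced_power_verts V n) (reduced_power_adj E) x0\<^esub> Y
           = Y \<otimes>\<^bsub>A1 (reduced_power_verts V n) (reduced_power_adj E) x0\<^esub> X"
proof (intro ballI)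
  interpret rp V E n by unfold_locales (rule assms(1))
  let ?W = "reduced_power_verts V n" and ?A = "reduced_power_adj E"
  fix X Y
  assume X: "X \<in> carrier (A1 ?W ?A x0)" and Y: "Y \<in> carrier (A1 ?W ?A x0)"
  have mem: "\<exists>f. f \<in> Z0 \<and> based_loop ?W ?A x0 f" if "Z0 \<in> carrier (A1 ?W ?A x0)" for Z0
  proof -
    have "Z0 \<in> {loop_class ?W ?A x0 f | f. based_loop ?W ?A x0 f}" using that by (simp add: A1_def)
    then obtain f0 where "Z0 = loop_class ?W ?A x0 f0" "based_loop ?W ?A x0 f0" by blast
    then show ?thesis using H_refl by (auto simp: loop_class_def)
  qed
  define f where "f = (SOME f. f \<in> X)"
  define g where "g = (SOME g. g \<in> Y)"
  have fX: "f \<in> X" using mem[OF X] unfolding f_def by (metis someI_ex)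
  have gY: "g \<in> Y" using mem[OF Y] unfolding g_def by (metis someI_ex)
  have bf: "based_loop ?W ?A x0 f" using X fX by (auto simp: A1_def loop_class_def)
  have bg: "based_loop ?W ?A x0 g" using Y gY by (auto simp: A1_def loop_class_def)
  have k: "H x0 (loop_concat x0 f g) (loop_concat x0 g f)"
    by (rule loop_comm[OF assms(2) assms(5) assms(4) bf bg])
  have "loop_class ?W ?A x0 (loop_concat x0 f g) = loop_class ?W ?A x0 (loop_concat x0 g f)"
    unfolding loop_class_def using k H_trans H_sym by blast
  then show "X \<otimes>\<^bsub>A1 ?W ?A x0\<^esub> Y = Y \<otimes>\<^bsub>A1 ?W ?A x0\<^esub> X"
    by (simp add: A1_def f_def g_def)
qed



end
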